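(* Let $A>0$, $R_0>0$, and let $f(r,\theta)$ be a function defined for $r\ge R_0$ and $\theta\in[0,A]$. Suppose that $\partial f/\partial\theta$ and $\partial^2 f/\partial\theta^2$ tend to zero uniformly as $r\to\infty$. Then for every sufficiently large $r$, the curve $\theta\in[0,A]\mapsto(r\cos\theta, r\sin\theta,\theta+f(r,\theta))$ has total curvature strictly less than $A$. *)

theory Defs
  imports "HOL-Analysis.Analysis" "HOL-Analysis.Cross3"
begin

definition velocity :: "(real \<Rightarrow> real^3) \<Rightarrow> real \<Rightarrow> real \<Rightarrow> real \<Rightarrow> real^3" where
  "velocity g a b t = vector_derivative g (at t within {a..b})"

definition acceleration :: "(real \<Rightarrow> real^3) \<Rightarrow> real \<Rightarrow> real \<Rightarrow> real \<Rightarrow> real^3" where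
  "acceleration g a b t = vector_derivative (velocity g a b) (at t within {a..b})"

definition curvature :: "(real \<Rightarrow> real^3) \<Rightarrow> real \<Rightarrow> real \<Rightarrow> real \<Rightarrow> real" where
  "curvature g a b t =
     norm (cross3 (velocity g a b t) (acceleration g a b t)) / norm (velocity g a b t) ^ 3"

definition total_curvature :: "(real \<Rightarrow> real^3) \<Rightarrow> real \<Rightarrow> real \<Rightarrow> real" where
  "total_curvature g a b = integral {a..b} (\<lambda>t. curvature g a b t * norm (velocity g a b t))"

end

theory Submission imports Defs begin

lemma vec3_eq: "(vector [a, b, c] :: real^3) = a *\<^sub>R axis 1 1 + b *\<^sub>R axis 2 1 + c *\<^sub>R axis 3 1"
  by (simp add: vec_eq_iff forall_3 axis_def)

lemma vec3_deriv:
  assumes "(a has_real_derivative a') F" "(b has_real_derivative b') F" "(c has_real_derivative c') F"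
  shows "((\<lambda>t. vector [a t, b t, c t] :: real^3) has_vector_derivative vector [a', b', c']) F"
proof -
  have sc: "\<And>u u' (v::real^3). (u has_real_derivative u') F \<Longrightarrow> ((\<lambda>t. u t *\<^sub>R v) has_vector_derivative u' *\<^sub>R v) F"
    by (rule bounded_linear.has_vector_derivative[OF bounded_linear_scaleR_left])
       (simp add: has_real_derivative_iff_has_vector_derivative)
  show ?thesis
    unfolding vec3_eq by (intro has_vector_derivative_add sc assms)
qed

lemma norm3: "norm (vector [a, b, c] :: real^3) = sqrt (a^2 + b^2 + c^2)"
  by (simp add: norm_eq_sqrt_inner inner_vec_def sum_3 power2_eq_square)

lemma cross3v: "cross3 (vector [a, b, c]) (vector [d, e, f]) = (vector [b*f - c*e, c*d - a*f, a*e - b*d] :: real^3)"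
  by (simp add: cross3_def vec_eq_iff forall_3)

lemma bound:
  fixes r p q sn co :: real
  assumes r: "r > 0" and p: "\<bar>p\<bar> < 1/4" and q: "\<bar>q\<bar> < 1/4" and sc: "sn^2 + co^2 = 1"
  defines "S1 \<equiv> (r * co * q - (1 + p) * - (r * sn))^2 + ((1 + p) * - (r * co) - - (r * sn) * q)^2 + (- (r * sn) * - (r * sn) - r * co * - (r * co))^2"
    and "SV \<equiv> (- (r * sn))^2 + (r * co)^2 + (1 + p)^2"
  shows "sqrt S1 / sqrt SV ^ 3 * sqrt SV \<le> sqrt (1 - r^2 / (2*(r^2+2)^2))"
proof -
  define u where "u = (1+p)^2"
  define w where "w = q^2"
  have SV: "SV = r^2 + u" unfolding SV_def u_def using sc by algebra
  have S1: "S1 = r^4 + r^2*(u + w)" unfolding S1_def u_def w_def using sc by algebra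
  have pp: "3/4 \<le> 1+p" "1+p \<le> 5/4" using p by auto
  have "(3/4::real)^2 \<le> (1+p)^2" using pp by (intro power_mono) auto
  then have u1: "u \<ge> 9/16" unfolding u_def by (simp add: power2_eq_square)
  have "(1+p)^2 \<le> (5/4::real)^2" using pp by (intro power_mono) auto
  then have u2: "u \<le> 25/16" unfolding u_def by (simp add: power2_eq_square)
  have "\<bar>q\<bar>^2 \<le> (1/4::real)^2" using q by (intro power_mono) auto
  then have w1: "w \<le> 1/16" unfolding w_def by (simp add: power2_eq_square)
  have w0: "w \<ge> 0" unfolding w_def by simp
  have r2': "r^2 \<ge> 0" by simp
  have SVpos: "SV > 0" using SV u1 r2' by linarith
  have S1pos: "S1 \<ge> 0" unfolding S1 using u1 w0 r2' by (intro add_nonneg_nonneg mult_nonneg_nonneg) auto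
  have eq: "sqrt S1 / sqrt SV ^ 3 * sqrt SV = sqrt (S1 / SV^2)"
    using SVpos by (simp add: real_sqrt_divide power3_eq_cube)
  have r2: "r^2 > 0" using r by simp
  have diff: "SV^2 - S1 \<ge> r^2/2"
  proof -
    have "SV^2 - S1 = r^2*(u - w) + u^2" unfolding SV S1 by (simp add: power2_eq_square power4_eq_xxxx algebra_simps)
    moreover have "r^2*(u-w) \<ge> r^2 * (1/2)" using u1 w1 r2 by (intro mult_left_mono) auto
    moreover have "u^2 \<ge> 0" by simp
    ultimately show ?thesis by linarith
  qed
  have SVle: "SV^2 \<le> (r^2+2)^2" using SV u2 SVpos by (intro power_mono) auto
  have "r^2+2 > 0" using r2 by linarith
  then have pos2: "(r^2+2)^2 \<noteq> 0" by simp
  have e2: "r^2/(2*(r^2+2)^2) * (r^2+2)^2 = r^2/2" using pos2 by simp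
  have "r^2/(2*(r^2+2)^2) * SV^2 \<le> r^2/(2*(r^2+2)^2) * (r^2+2)^2"
    using SVle r2 by (intro mult_left_mono) auto
  then have "r^2/(2*(r^2+2)^2) * SV^2 \<le> r^2/2" using e2 by simp
  then have "S1 \<le> (1 - r^2/(2*(r^2+2)^2)) * SV^2" using diff by (simp add: algebra_simps)
  then have "S1 / SV^2 \<le> 1 - r^2/(2*(r^2+2)^2)" using SVpos by (simp add: divide_le_eq)
  then show ?thesis unfolding eq by (rule real_sqrt_le_mono)
qed

lemma ftc_meas:
  assumes "A > 0" "\<And>t. t \<in> {0..A} \<Longrightarrow> (F has_real_derivative F' t) (at t within {0..A})"
  shows "F' \<in> borel_measurable (lebesgue_on {0..A})"
proof -
  have "(F' has_integral (F A - F 0)) {0..A}"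
    using assms by (intro fundamental_theorem_of_calculus)
      (auto simp: has_real_derivative_iff_has_vector_derivative[symmetric])
  then show ?thesis by (intro integrable_imp_measurable) blast
qed

theorem lemma3p2:
  fixes f f1 f2 :: "real \<Rightarrow> real \<Rightarrow> real" and A R0 :: real
  assumes A_pos: "A > 0" and R0_pos: "R0 > 0"
    and d1: "\<And>r \<theta>. r \<ge> R0 \<Longrightarrow> \<theta> \<in> {0..A} \<Longrightarrow>
               ((\<lambda>t. f r t) has_real_derivative f1 r \<theta>) (at \<theta> within {0..A})"
    and d2: "\<And>r \<theta>. r \<ge> R0 \<Longrightarrow> \<theta> \<in> {0..A} \<Longrightarrow>
               ((\<lambda>t. f1 r t) has_real_derivative f2 r \<theta>) (at \<theta> within {0..A})"
    and unif: "\<And>\<epsilon>. \<epsilon> > 0 \<Longrightarrow> \<exists>R. \<forall>r\<ge>R. \<forall>\<theta>\<in>{0..A}. \<bar>f1 r \<theta>\<bar> < \<epsilon> \<and> \<bar>f2 r \<theta>\<bar> < \<epsilon>"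
  shows "\<exists>R\<ge>R0. \<forall>r\<ge>R.
           (\<lambda>\<theta>. curvature (\<lambda>t. vector [r * cos t, r * sin t, t + f r t]) 0 A \<theta>
                 * norm (velocity (\<lambda>t. vector [r * cos t, r * sin t, t + f r t]) 0 A \<theta>))
             integrable_on {0..A}
         \<and> total_curvature (\<lambda>t. vector [r * cos t, r * sin t, t + f r t]) 0 A < A"
proof -
  obtain R1 where R1: "\<forall>r\<ge>R1. \<forall>\<theta>\<in>{0..A}. \<bar>f1 r \<theta>\<bar> < 1/4 \<and> \<bar>f2 r \<theta>\<bar> < 1/4"
    using unif[of "1/4"] by auto
  define R where "R = max R0 (max R1 1)"
  have "\<forall>r\<ge>R.
           (\<lambda>\<theta>. curvature (\<lambda>t. vector [r * cos t, r * sin t, t + f r t]) 0 A \<theta>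
                 * norm (velocity (\<lambda>t. vector [r * cos t, r * sin t, t + f r t]) 0 A \<theta>))
             integrable_on {0..A}
         \<and> total_curvature (\<lambda>t. vector [r * cos t, r * sin t, t + f r t]) 0 A < A"
  proof (intro allI impI)
    fix r assume rR: "r \<ge> R"
    have r0: "r \<ge> R0" and r1: "r \<ge> R1" and rpos: "r > 0" using rR R0_pos by (auto simp: R_def)
    define g where "g = (\<lambda>t. vector [r * cos t, r * sin t, t + f r t] :: real^3)"
    define V where "V = (\<lambda>t. vector [- (r * sin t), r * cos t, 1 + f1 r t] :: real^3)"
    define Ac where "Ac = (\<lambda>t. vector [- (r * cos t), - (r * sin t), f2 r t] :: real^3)"
    have gd: "(g has_vector_derivative V t) (at t within {0..A})" if t: "t \<in> {0..A}" for t
      unfolding g_def V_def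
    proof (rule vec3_deriv)
      show "((\<lambda>t. r * cos t) has_real_derivative - (r * sin t)) (at t within {0..A})"
        by (auto intro!: derivative_eq_intros)
      show "((\<lambda>t. r * sin t) has_real_derivative r * cos t) (at t within {0..A})"
        by (auto intro!: derivative_eq_intros)
      show "((\<lambda>t. t + f r t) has_real_derivative 1 + f1 r t) (at t within {0..A})"
        using d1[OF r0 t] by (auto intro!: derivative_eq_intros)
    qed
    have vel: "velocity g 0 A t = V t" if t: "t \<in> {0..A}" for t
      unfolding velocity_def using A_pos t gd[OF t] by (intro vector_derivative_within_closed_interval) auto
    have Vd: "(V has_vector_derivative Ac t) (at t within {0..A})" if t: "t \<in> {0..A}" for t
      unfolding Ac_def V_def
    proof (rule vec3_deriv)
      show "((\<lambda>t. - (r * sin t)) has_real_derivative - (r * cos t)) (at t within {0..A})"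
        by (auto intro!: derivative_eq_intros)
      show "((\<lambda>t. r * cos t) has_real_derivative - (r * sin t)) (at t within {0..A})"
        by (auto intro!: derivative_eq_intros)
      show "((\<lambda>t. 1 + f1 r t) has_real_derivative f2 r t) (at t within {0..A})"
        using d2[OF r0 t] by (auto intro!: derivative_eq_intros)
    qed
    have veld: "(velocity g 0 A has_vector_derivative Ac t) (at t within {0..A})" if t: "t \<in> {0..A}" for t
      by (rule has_vector_derivative_weaken[OF Vd[OF t] t]) (auto simp: vel)
    have acc: "acceleration g 0 A t = Ac t" if t: "t \<in> {0..A}" for t
      unfolding acceleration_def using A_pos t veld[OF t] by (intro vector_derivative_within_closed_interval) auto
    define K where "K = (\<lambda>t. sqrt ((r * cos t * f2 r t - (1 + f1 r t) * - (r * sin t))^2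
        + ((1 + f1 r t) * - (r * cos t) - - (r * sin t) * f2 r t)^2
        + (- (r * sin t) * - (r * sin t) - r * cos t * - (r * cos t))^2)
       / sqrt ((- (r * sin t))^2 + (r * cos t)^2 + (1 + f1 r t)^2) ^ 3
       * sqrt ((- (r * sin t))^2 + (r * cos t)^2 + (1 + f1 r t)^2))"
    have eqK: "curvature g 0 A t * norm (velocity g 0 A t) = K t" if t: "t \<in> {0..A}" for t
      unfolding curvature_def vel[OF t] acc[OF t] V_def Ac_def cross3v norm3 K_def ..
    define c where "c = sqrt (1 - r^2 / (2*(r^2+2)^2))"
    have Kle: "K t \<le> c" if t: "t \<in> {0..A}" for t
      unfolding K_def c_def
      by (rule bound) (use rpos R1 r1 t in auto)
    have K0: "K t \<ge> 0" for t unfolding K_def by simp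
    have c1: "c < 1"
    proof -
      have a: "r^2 > 0" using rpos by simp
      then have "r^2+2 > 0" by linarith
      then have "2*(r^2+2)^2 > 0" by simp
      then have "r^2 / (2*(r^2+2)^2) > 0" using a by (rule divide_pos_pos[rotated])
      then show ?thesis unfolding c_def by simp
    qed
    have m1: "f1 r \<in> borel_measurable (lebesgue_on {0..A})"
      by (rule ftc_meas[OF A_pos d1[OF r0]])
    have m2: "f2 r \<in> borel_measurable (lebesgue_on {0..A})"
      by (rule ftc_meas[OF A_pos d2[OF r0]])
    have Km: "K \<in> borel_measurable (lebesgue_on {0..A})"
    proof -
      note [measurable] = m1 m2
      have [measurable]: "(\<lambda>x. x) \<in> borel_measurable (lebesgue_on {0..A})"
        by (rule continuous_imp_measurable_on_sets_lebesgue) (auto intro: continuous_on_id)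
      show ?thesis unfolding K_def by measurable
    qed
    have Kabs: "K absolutely_integrable_on {0..A}"
      by (rule measurable_bounded_by_integrable_imp_absolutely_integrable[where g="\<lambda>_. 1"])
         (use Km K0 c1 in \<open>auto intro: order_trans[OF Kle]\<close>)
    then have Ki: "K integrable_on {0..A}" by (rule set_lebesgue_integral_eq_integral(1))
    have int: "(\<lambda>t. curvature g 0 A t * norm (velocity g 0 A t)) integrable_on {0..A}"
      by (rule integrable_eq[OF Ki]) (simp add: eqK)
    have "total_curvature g 0 A = integral {0..A} K"
      unfolding total_curvature_def by (rule integral_cong) (simp add: eqK)
    also have "\<dots> \<le> integral {0..A} (\<lambda>_. c)"
      by (rule integral_le[OF Ki]) (auto simp: Kle)
    also have "\<dots> = c * A" using A_pos by simp
    also have "\<dots> < A" using c1 A_pos by simp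
    finally show "(\<lambda>\<theta>. curvature (\<lambda>t. vector [r * cos t, r * sin t, t + f r t]) 0 A \<theta>
                 * norm (velocity (\<lambda>t. vector [r * cos t, r * sin t, t + f r t]) 0 A \<theta>))
             integrable_on {0..A}
         \<and> total_curvature (\<lambda>t. vector [r * cos t, r * sin t, t + f r t]) 0 A < A"
      using int unfolding g_def by simp
  qed
  moreover have "R \<ge> R0" by (simp add: R_def)
  ultimately show ?thesis by blast
qed

end
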